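(* Let $M$ be an $\widehat{\mathrm{FI}}$-module. If for some $N$ the module $\Sigma^NM$ is an $\mathrm{FI}$-module with generation degree $\le d$, then $\delta(M)\le d$.
   Context: $\widehat{\mathrm S}_n=\{(\sigma,d)\in\mathrm S_n\times\mathbb Z: d\text{ odd}\iff\operatorname{sgn}\sigma=-1\}$ ($n\ge2$; trivial for $n=0,1$). $\widehat{\mathrm{FI}}$: objects $n\in\mathbb N$, $\widehat{\mathrm{FI}}(n,m)=\widehat{\mathrm S}_m/i_2(\widehat{\mathrm S}_{m-n})$, composition $([s],[t])\mapsto[t\,i_1(s)]$, with a monoidal structure $n\oplus m=n+m$ (morphisms combined using $i_1,i_2$ and a braiding from $\mathrm{Br}_n\to\widehat{\mathrm S}_n$). $\Sigma M$ is the restriction of $M$ along $-\oplus1$; the morphism $0\to 1$ gives $M\to\Sigma M$; $\Delta M$ is its cokernel. $M$ is torsion if each $x\in M_n$ satisfies $f_*(x)=0$ for some morphism $f:n\to m$. The stable degree $\delta(M)$ is the least $N\ge-1$ with $\Delta^{N+1}M$ torsion. An $\mathrm{FI}$-module here is an $\widehat{\mathrm{FI}}$-module factoring through $\widehat{\mathrm{FI}}\to\mathrm{FI}$; generation degree $\le d$ means being a quotient of a module induced from degrees $\le d$. *)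

theory Defs
  imports "HOL-Combinatorics.Permutations" "HOL-Library.Extended_Real"
begin

text \<open>Elements of \<open>S_n \<times> \<int>\<close>: a permutation of \<open>{0..<n}\<close> (identity elsewhere) and an integer.\<close>
type_synonym shat = "(nat \<Rightarrow> nat) \<times> int"

definition Shat :: "nat \<Rightarrow> shat set" where
  "Shat n = (if n \<le> 1 then {(id, 0)}
             else {(\<sigma>, d). \<sigma> permutes {..<n} \<and> (odd d \<longleftrightarrow> sign \<sigma> = -1)})"

definition smul :: "shat \<Rightarrow> shat \<Rightarrow> shat" where
  "smul s t = (fst s \<circ> fst t, snd s + snd t)"

definition sone :: shat where "sone = (id, 0)"

text \<open>\<open>i_1 : S^_n \<rightarrow> S^_(n+m)\<close> is the identity on our representation (permutations of
  \<open>{..<n}\<close> are permutations of \<open>{..<n+m}\<close>); \<open>i_2 n : S^_k \<rightarrow> S^_(n+k)\<close> shifts by \<open>n\<close>.\<close>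
definition i1 :: "shat \<Rightarrow> shat" where "i1 s = s"

definition i2 :: "nat \<Rightarrow> shat \<Rightarrow> shat" where
  "i2 n s = ((\<lambda>i. if i < n then i else n + fst s (i - n)), snd s)"

text \<open>A representative in \<open>S^_(m+1)\<close> of \<open>id_n \<oplus> braiding\<close> used for \<open>f \<oplus> id_1\<close>, \<open>f : n \<rightarrow> m\<close>:
  the cycle sending \<open>n \<mapsto> m\<close> and \<open>i \<mapsto> i-1\<close> for \<open>n < i \<le> m\<close>, lifted with \<open>m-n\<close> crossings.\<close>
definition cyc :: "nat \<Rightarrow> nat \<Rightarrow> shat" where
  "cyc n m = ((\<lambda>i. if n \<le> i \<and> i \<le> m then (if i = n then m else i - 1) else i), int (m - n))"

text \<open>An \<open>FI^\<close>-module with values in abelian groups: \<open>carr n\<close> is the group \<open>M_n\<close>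
 (a subgroup of the ambient abelian group \<open>'a\<close>), and \<open>act n m s\<close> is \<open>[s]_* : M_n \<rightarrow> M_m\<close>
 for the morphism \<open>[s] \<in> FI^(n,m) = S^_m / i_2(S^_(m-n))\<close> represented by \<open>s \<in> S^_m\<close>.\<close>
record 'a fhmod =
  carr :: "nat \<Rightarrow> 'a set"
  act :: "nat \<Rightarrow> nat \<Rightarrow> shat \<Rightarrow> 'a \<Rightarrow> 'a"

definition is_subgroup :: "'a::ab_group_add set \<Rightarrow> bool" where
  "is_subgroup H \<longleftrightarrow> 0 \<in> H \<and> (\<forall>a\<in>H. \<forall>b\<in>H. a - b \<in> H)"

definition fihat_module :: "'a::ab_group_add fhmod \<Rightarrow> bool" where
  "fihat_module M \<longleftrightarrow>
     (\<forall>n. is_subgroup (carr M n)) \<and>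
     (\<forall>n m s. n \<le> m \<longrightarrow> s \<in> Shat m \<longrightarrow>
        (\<forall>x\<in>carr M n. act M n m s x \<in> carr M m) \<and>
        (\<forall>x\<in>carr M n. \<forall>y\<in>carr M n. act M n m s (x + y) = act M n m s x + act M n m s y) \<and>
        (\<forall>u\<in>Shat (m - n). \<forall>x\<in>carr M n. act M n m (smul s (i2 n u)) x = act M n m s x)) \<and>
     (\<forall>n. \<forall>x\<in>carr M n. act M n n sone x = x) \<and>
     (\<forall>n m k s t. n \<le> m \<longrightarrow> m \<le> k \<longrightarrow> s \<in> Shat m \<longrightarrow> t \<in> Shat k \<longrightarrow>
        (\<forall>x\<in>carr M n. act M m k t (act M n m s x) = act M n k (smul t (i1 s)) x))"

text \<open>Subquotients: a pair \<open>(M, K)\<close> stands for the module \<open>n \<mapsto> M_n / K_n\<close>.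
  All constructions (\<open>\<Sigma>\<close>, \<open>\<Delta>\<close>) are performed on such pairs; an honest module \<open>M\<close> is \<open>(M, 0)\<close>.\<close>
type_synonym 'a sqmod = "'a fhmod \<times> (nat \<Rightarrow> 'a set)"

definition as_sq :: "'a::ab_group_add fhmod \<Rightarrow> 'a sqmod" where
  "as_sq M = (M, \<lambda>_. {0})"

text \<open>\<open>\<Sigma>\<close>: restriction along \<open>- \<oplus> 1\<close>; \<open>[s] \<oplus> id_1 = [i_1(s) \<cdot> cyc n m]\<close>.\<close>
definition Sig_mod :: "'a fhmod \<Rightarrow> 'a fhmod" where
  "Sig_mod M = \<lparr> carr = (\<lambda>n. carr M (Suc n)),
                 act = (\<lambda>n m s. act M (Suc n) (Suc m) (smul (i1 s) (cyc n m))) \<rparr>"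

definition Sig :: "'a sqmod \<Rightarrow> 'a sqmod" where
  "Sig P = (Sig_mod (fst P), (\<lambda>n. snd P (Suc n)))"

text \<open>\<open>\<Delta>\<close>: cokernel of \<open>M \<rightarrow> \<Sigma>M\<close>, induced by \<open>id_n \<oplus> (0 \<rightarrow> 1) = [id] \<in> FI^(n, n+1)\<close>.\<close>
definition Del :: "'a::ab_group_add sqmod \<Rightarrow> 'a sqmod" where
  "Del P = (Sig_mod (fst P),
            (\<lambda>n. {a + act (fst P) n (Suc n) sone b | a b. a \<in> snd P (Suc n) \<and> b \<in> carr (fst P) n}))"

definition torsion :: "'a::ab_group_add sqmod \<Rightarrow> bool" where
  "torsion P \<longleftrightarrow> (\<forall>n. \<forall>x\<in>carr (fst P) n. \<exists>m\<ge>n. \<exists>s\<in>Shat m. act (fst P) n m s x \<in> snd P m)"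

definition stable_degree :: "'a::ab_group_add sqmod \<Rightarrow> ereal" where
  "stable_degree P = Inf {ereal (of_int N) | N. N \<ge> -1 \<and> torsion ((Del ^^ nat (N + 1)) P)}"

text \<open>FI-modules: the action of \<open>[s] \<in> FI^(n,m)\<close> factors through the functor \<open>FI^ \<rightarrow> FI\<close>,
  \<open>[s] \<mapsto>\<close> the injection \<open>fst s|_{..<n}\<close>.\<close>
definition fi_module :: "'a::ab_group_add sqmod \<Rightarrow> bool" where
  "fi_module P \<longleftrightarrow> (\<exists>G. \<forall>n m s. n \<le> m \<longrightarrow> s \<in> Shat m \<longrightarrow>
      (\<forall>x\<in>carr (fst P) n. act (fst P) n m s x - G n m (restrict (fst s) {..<n}) x \<in> snd P m))"

definition add_span :: "'a::ab_group_add set \<Rightarrow> 'a set" where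
  "add_span S = \<Inter>{H. is_subgroup H \<and> S \<subseteq> H}"

definition gen_deg_le :: "'a::ab_group_add sqmod \<Rightarrow> int \<Rightarrow> bool" where
  "gen_deg_le P d \<longleftrightarrow> (\<forall>n. carr (fst P) n \<subseteq>
      add_span ({act (fst P) k n s x | k s x. int k \<le> d \<and> k \<le> n \<and> s \<in> Shat n \<and> x \<in> carr (fst P) k}
                \<union> snd P n))"

end

theory Submission imports Defs begin

definition good :: "nat \<Rightarrow> shat \<Rightarrow> bool" where
  "good m s \<longleftrightarrow> fst s permutes {..<m} \<and> (odd (snd s) \<longleftrightarrow> \<not> evenperm (fst s))"

lemma sign_m1: "sign p = -1 \<longleftrightarrow> \<not> evenperm p"
  by (simp add: sign_def)

lemma Shat_good: "s \<in> Shat m \<Longrightarrow> good m s"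
  by (auto simp: Shat_def good_def sign_m1 permutes_id split: if_splits)

lemma good_Shat: "2 \<le> m \<Longrightarrow> good m s \<Longrightarrow> s \<in> Shat m"
  by (cases s) (auto simp: Shat_def good_def sign_m1)

lemma good_mono: "m \<le> m' \<Longrightarrow> good m s \<Longrightarrow> good m' s"
  unfolding good_def using permutes_subset[of "fst s" "{..<m}" "{..<m'}"] by auto

lemma good_perm: "good m s \<Longrightarrow> permutation (fst s)"
  unfolding good_def using permutes_imp_permutation by blast

lemma good_smul: "good m s \<Longrightarrow> good m t \<Longrightarrow> good m (smul s t)"
  using good_perm[of m s] good_perm[of m t]
  unfolding good_def smul_def
  by (auto simp: permutes_compose evenperm_comp)

definition sinv :: "shat \<Rightarrow> shat" where "sinv s = (inv (fst s), - snd s)"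

lemma good_sinv: "good m s \<Longrightarrow> good m (sinv s)"
  using good_perm[of m s] unfolding good_def sinv_def
  by (auto simp: permutes_inv evenperm_inv)

lemma smul_sinv: "good m s \<Longrightarrow> smul s (sinv s) = sone"
  unfolding good_def sinv_def smul_def sone_def
  by (auto simp: permutes_inv_o)

lemma sinv_smul: "good m s \<Longrightarrow> smul (sinv s) (smul s t) = t"
  unfolding good_def sinv_def smul_def
  by (cases t) (auto simp: o_assoc permutes_inv_o)

lemma smul_assoc: "smul (smul a b) c = smul a (smul b c)"
  by (simp add: smul_def o_assoc add.assoc)

lemma good_sone: "good m sone"
  by (simp add: good_def sone_def permutes_id)

lemma good_swap: "a < m \<Longrightarrow> b < m \<Longrightarrow> good m (transpose a b, if a = b then 0 else 1)"
  by (auto simp: good_def permutes_swap_id evenperm_swap)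

lemma cyc_same: "cyc n n = sone"
  by (auto simp: cyc_def sone_def fun_eq_iff)

lemma cyc_Suc: "n \<le> m \<Longrightarrow> cyc n (Suc m) = smul (transpose m (Suc m), 1) (cyc n m)"
  by (auto simp: cyc_def smul_def fun_eq_iff transpose_def)

lemma good_cyc_aux: "good (Suc (n + k)) (cyc n (n + k))"
proof (induction k)
  case 0 then show ?case by (simp add: cyc_same good_sone)
next
  case (Suc k)
  have g1: "good (Suc (Suc (n + k))) (transpose (n + k) (Suc (n + k)), 1)"
    using good_swap[of "n + k" "Suc (Suc (n + k))" "Suc (n + k)"] by simp
  have g2: "good (Suc (Suc (n + k))) (cyc n (n + k))"
    by (rule good_mono[OF _ Suc.IH]) simp
  have "cyc n (n + Suc k) = smul (transpose (n + k) (Suc (n + k)), 1) (cyc n (n + k))"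
    using cyc_Suc[of n "n + k"] by simp
  then show ?case using good_smul[OF g1 g2] by simp
qed

lemma good_cyc: "n \<le> m \<Longrightarrow> good (Suc m) (cyc n m)"
  using good_cyc_aux[of n "m - n"] by simp

lemma smul_sinv_left: "good m s \<Longrightarrow> smul s (smul (sinv s) t) = t"
  unfolding good_def sinv_def smul_def
  by (cases t) (auto simp: o_assoc permutes_inv_o)

lemma sone_Shat: "sone \<in> Shat m"
  by (auto simp: Shat_def sone_def permutes_id)

fun W :: "nat \<Rightarrow> nat \<Rightarrow> nat \<Rightarrow> shat \<Rightarrow> shat" where
  "W 0 n m s = s"
| "W (Suc j) n m s = W j (Suc n) (Suc m) (smul s (cyc n m))"

lemma Sig_pow_carr: "carr ((Sig_mod ^^ j) M) n = carr M (n + j)"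
  by (induction j arbitrary: n) (auto simp: Sig_mod_def)

lemma Sig_pow_act: "act ((Sig_mod ^^ j) M) n m s x = act M (n + j) (m + j) (W j n m s) x"
  by (induction j arbitrary: n m s) (auto simp: Sig_mod_def i1_def)

lemma W_good: "n \<le> m \<Longrightarrow> good m s \<Longrightarrow> good (m + j) (W j n m s)"
proof (induction j arbitrary: n m s)
  case 0 then show ?case by simp
next
  case (Suc j)
  have "good (Suc m) (smul s (cyc n m))"
    using Suc.prems good_cyc good_mono[of m "Suc m" s] good_smul by simp
  from Suc.IH[OF _ this] Suc.prems show ?case by simp
qed

lemma W_Shat: assumes "n \<le> m" "s \<in> Shat m" shows "W j n m s \<in> Shat (m + j)"
proof (cases "2 \<le> m + j")
  case True then show ?thesis using W_good[OF assms(1) Shat_good[OF assms(2)]] good_Shat by blast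
next
  case False
  then consider "j = 0" | "j = 1" "m = 0" by linarith
  then show ?thesis
  proof cases
    case 1 then show ?thesis using assms by simp
  next
    case 2
    then have "n = 0" "s = (id, 0)" using assms by (auto simp: Shat_def)
    then show ?thesis using 2 by (simp add: cyc_same[of 0, unfolded sone_def] smul_def Shat_def)
  qed
qed

lemma W_low: "x < n \<Longrightarrow> fst (W j n m s) x = fst s x"
  by (induction j arbitrary: n m s) (auto simp: smul_def cyc_def)

lemma W_high: "n \<le> m \<Longrightarrow> (\<forall>y\<ge>m. fst s y = y) \<Longrightarrow> n \<le> x \<Longrightarrow> x < n + j \<Longrightarrow>
   m \<le> fst (W j n m s) x \<and> fst (W j n m s) x < m + j"
proof (induction j arbitrary: n m s)
  case 0 then show ?case by simp
next
  case (Suc j)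
  show ?case
  proof (cases "x = n")
    case True
    then have "fst (W (Suc j) n m s) x = fst s (fst (cyc n m) n)"
      using W_low[of n "Suc n" j "Suc m"] by (simp add: smul_def)
    also have "\<dots> = m" using Suc.prems by (simp add: cyc_def)
    finally show ?thesis by simp
  next
    case False
    have "\<forall>y\<ge>Suc m. fst (smul s (cyc n m)) y = y"
      using Suc.prems by (auto simp: smul_def cyc_def)
    then show ?thesis using Suc.IH[of "Suc n" "Suc m" "smul s (cyc n m)"] Suc.prems False by simp
  qed
qed

lemma W_miss: "inj (fst s) \<Longrightarrow> x < n + j \<Longrightarrow> fst (W j n (Suc n) s) x \<noteq> fst s n"
proof (induction j arbitrary: n s)
  case 0 then show ?case by (auto dest: injD)
next
  case (Suc j)
  have inj: "inj (fst (smul s (cyc n (Suc n))))"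
  proof -
    have "fst (cyc n (Suc n)) = transpose n (Suc n)"
      by (auto simp: cyc_def fun_eq_iff transpose_def)
    then show ?thesis using Suc.prems by (simp add: smul_def inj_compose)
  qed
  have "fst (smul s (cyc n (Suc n))) (Suc n) = fst s n" by (simp add: smul_def cyc_def)
  moreover have "fst (W j (Suc n) (Suc (Suc n)) (smul s (cyc n (Suc n)))) x \<noteq> fst (smul s (cyc n (Suc n))) (Suc n)"
    by (rule Suc.IH) (use inj Suc.prems in auto)
  ultimately show ?case by simp
qed

lemma Sig_pow_sq: "(Sig ^^ N) (as_sq M) = ((Sig_mod ^^ N) M, \<lambda>_. {0})"
proof (induction N)
  case 0 then show ?case by (simp add: as_sq_def)
next
  case (Suc N)
  have "(Sig ^^ Suc N) (as_sq M) = Sig ((Sig ^^ N) (as_sq M))" by simp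
  also have "\<dots> = Sig ((Sig_mod ^^ N) M, \<lambda>_. {0})" by (simp only: Suc.IH)
  also have "\<dots> = ((Sig_mod ^^ Suc N) M, \<lambda>_. {0})" by (simp add: Sig_def)
  finally show ?case .
qed

lemma Del_pow_fst: "fst ((Del ^^ j) P) = (Sig_mod ^^ j) (fst P)"
proof (induction j)
  case 0 then show ?case by simp
next
  case (Suc j)
  have "fst ((Del ^^ Suc j) P) = fst (Del ((Del ^^ j) P))" by simp
  also have "\<dots> = Sig_mod (fst ((Del ^^ j) P))" by (simp add: Del_def)
  finally show ?case using Suc.IH by simp
qed

lemma Del_pow_snd: "snd ((Del ^^ Suc j) P) n = {a + act ((Sig_mod ^^ j) (fst P)) n (Suc n) sone b | a b.
   a \<in> snd ((Del ^^ j) P) (Suc n) \<and> b \<in> carr ((Sig_mod ^^ j) (fst P)) n}"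
proof -
  have "snd ((Del ^^ Suc j) P) n = snd (Del ((Del ^^ j) P)) n" by simp
  also have "\<dots> = {a + act (fst ((Del ^^ j) P)) n (Suc n) sone b | a b.
   a \<in> snd ((Del ^^ j) P) (Suc n) \<and> b \<in> carr (fst ((Del ^^ j) P)) n}" by (simp only: Del_def snd_conv)
  finally show ?thesis by (simp only: Del_pow_fst)
qed

lemma sg_0: "is_subgroup H \<Longrightarrow> 0 \<in> H" by (simp add: is_subgroup_def)
lemma sg_diff: "is_subgroup H \<Longrightarrow> a \<in> H \<Longrightarrow> b \<in> H \<Longrightarrow> a - b \<in> H" by (simp add: is_subgroup_def)
lemma sg_add: "is_subgroup H \<Longrightarrow> a \<in> H \<Longrightarrow> b \<in> H \<Longrightarrow> a + b \<in> H"
  using sg_diff[of H a "0 - b"] sg_diff[of H 0 b] sg_0[of H] by simp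

lemma additive_zero: "is_subgroup B \<Longrightarrow> (\<forall>x\<in>B. \<forall>y\<in>B. f (x + y) = f x + f y) \<Longrightarrow> f 0 = (0::'a::ab_group_add)"
proof -
  assume B: "is_subgroup B" and f: "\<forall>x\<in>B. \<forall>y\<in>B. f (x + y) = f x + f y"
  have "f (0 + 0) = f 0 + f 0" using f sg_0[OF B] by blast
  then show ?thesis by simp
qed

lemma additive_diff: "is_subgroup B \<Longrightarrow> (\<forall>x\<in>B. \<forall>y\<in>B. f (x + y) = f x + f y) \<Longrightarrow> x \<in> B \<Longrightarrow> y \<in> B
   \<Longrightarrow> f (x - y) = f x - (f y :: 'a::ab_group_add)"
proof -
  assume B: "is_subgroup B" and f: "\<forall>x\<in>B. \<forall>y\<in>B. f (x + y) = f x + f y" and xy: "x \<in> B" "y \<in> B"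
  have "x - y \<in> B" using B xy sg_diff by blast
  then have "f (x - y + y) = f (x - y) + f y" using f xy by blast
  then show ?thesis by (simp add: algebra_simps)
qed

lemma sum_image_subgroup:
  assumes A: "is_subgroup A" and B: "is_subgroup B" and f: "\<forall>x\<in>B. \<forall>y\<in>B. f (x + y) = f x + f y"
  shows "is_subgroup {a + f b | a b. a \<in> A \<and> b \<in> B}"
  unfolding is_subgroup_def
proof (intro conjI ballI)
  show "(0::'a) \<in> {a + f b |a b. a \<in> A \<and> b \<in> B}"
    using additive_zero[OF B f] sg_0[OF A] sg_0[OF B] by force
next
  fix u v assume "u \<in> {a + f b |a b. a \<in> A \<and> b \<in> B}" "v \<in> {a + f b |a b. a \<in> A \<and> b \<in> B}"
  then obtain a1 b1 a2 b2 where h: "u = a1 + f b1" "v = a2 + f b2" "a1 \<in> A" "a2 \<in> A" "b1 \<in> B" "b2 \<in> B" by blast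
  have "u - v = (a1 - a2) + f (b1 - b2)" using additive_diff[OF B f h(5,6)] h by (simp add: algebra_simps)
  moreover have "a1 - a2 \<in> A" "b1 - b2 \<in> B" using h sg_diff A B by auto
  ultimately show "u - v \<in> {a + f b |a b. a \<in> A \<and> b \<in> B}" by blast
qed

lemma preimage_subgroup:
  assumes K: "is_subgroup K" and B: "is_subgroup B" and f: "\<forall>x\<in>B. \<forall>y\<in>B. f (x + y) = f x + f y"
  shows "is_subgroup {w \<in> B. f w \<in> K}"
  unfolding is_subgroup_def
proof (intro conjI ballI)
  show "0 \<in> {w \<in> B. f w \<in> K}" using additive_zero[OF B f] sg_0[OF K] sg_0[OF B] by simp
next
  fix u v assume u: "u \<in> {w \<in> B. f w \<in> K}" and v: "v \<in> {w \<in> B. f w \<in> K}"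
  then have "u \<in> B" "v \<in> B" "f u \<in> K" "f v \<in> K" by auto
  moreover have "f (u - v) = f u - f v" using additive_diff[OF B f] calculation by blast
  ultimately show "u - v \<in> {w \<in> B. f w \<in> K}" using sg_diff[OF K] sg_diff[OF B] by simp
qed

lemma add_span_least: "is_subgroup H \<Longrightarrow> S \<subseteq> H \<Longrightarrow> add_span S \<subseteq> H"
  unfolding add_span_def by blast


context
  fixes M :: "'a::ab_group_add fhmod"
  assumes FM: "fihat_module M"
begin

lemma M_sub: "is_subgroup (carr M n)"
  using FM by (simp add: fihat_module_def)

lemma FM2: "\<forall>n m s. n \<le> m \<longrightarrow> s \<in> Shat m \<longrightarrow>
        (\<forall>x\<in>carr M n. act M n m s x \<in> carr M m) \<and>
        (\<forall>x\<in>carr M n. \<forall>y\<in>carr M n. act M n m s (x + y) = act M n m s x + act M n m s y) \<and>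
        (\<forall>u\<in>Shat (m - n). \<forall>x\<in>carr M n. act M n m (smul s (i2 n u)) x = act M n m s x)"
  using FM unfolding fihat_module_def by (elim conjE) assumption

lemma FM3: "\<forall>n. \<forall>x\<in>carr M n. act M n n sone x = x"
  using FM unfolding fihat_module_def by (elim conjE) assumption

lemma FM4: "\<forall>n m k s t. n \<le> m \<longrightarrow> m \<le> k \<longrightarrow> s \<in> Shat m \<longrightarrow> t \<in> Shat k \<longrightarrow>
        (\<forall>x\<in>carr M n. act M m k t (act M n m s x) = act M n k (smul t (i1 s)) x)"
  using FM unfolding fihat_module_def by (elim conjE) assumption

lemma M_closed: "n \<le> m \<Longrightarrow> s \<in> Shat m \<Longrightarrow> x \<in> carr M n \<Longrightarrow> act M n m s x \<in> carr M m"
  using FM2[rule_format, of n m s] by blast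

lemma M_add: "n \<le> m \<Longrightarrow> s \<in> Shat m \<Longrightarrow> \<forall>x\<in>carr M n. \<forall>y\<in>carr M n. act M n m s (x + y) = act M n m s x + act M n m s y"
  using FM2[rule_format, of n m s] by blast

lemma M_inv: "n \<le> m \<Longrightarrow> s \<in> Shat m \<Longrightarrow> u \<in> Shat (m - n) \<Longrightarrow> x \<in> carr M n \<Longrightarrow> act M n m (smul s (i2 n u)) x = act M n m s x"
  using FM2[rule_format, of n m s] by blast

lemma M_id: "x \<in> carr M n \<Longrightarrow> act M n n sone x = x"
  using FM3 by blast

lemma M_comp: "n \<le> m \<Longrightarrow> m \<le> k \<Longrightarrow> s \<in> Shat m \<Longrightarrow> t \<in> Shat k \<Longrightarrow> x \<in> carr M n \<Longrightarrow>
   act M m k t (act M n m s x) = act M n k (smul t s) x"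
  using FM4[rule_format, of n m k s t x] unfolding i1_def by blast

lemma M_zero: "n \<le> m \<Longrightarrow> s \<in> Shat m \<Longrightarrow> act M n m s 0 = 0"
  using additive_zero[OF M_sub M_add] by blast

lemma Sig_add: "\<forall>x\<in>carr ((Sig_mod ^^ j) M) n. \<forall>y\<in>carr ((Sig_mod ^^ j) M) n.
   act ((Sig_mod ^^ j) M) n (Suc n) sone (x + y) = act ((Sig_mod ^^ j) M) n (Suc n) sone x + act ((Sig_mod ^^ j) M) n (Suc n) sone y"
  unfolding Sig_pow_carr Sig_pow_act
  using M_add[of "n + j" "Suc n + j" "W j n (Suc n) sone"] W_Shat[of n "Suc n" sone j] sone_Shat
  by simp

lemma snd_sub: "is_subgroup (snd ((Del ^^ j) (as_sq M)) n)"
proof (induction j arbitrary: n)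
  case 0 then show ?case by (simp add: as_sq_def is_subgroup_def)
next
  case (Suc j)
  have fstP: "fst (as_sq M) = M" by (simp add: as_sq_def)
  show ?case unfolding Del_pow_snd fstP
    by (rule sum_image_subgroup[OF Suc.IH _ Sig_add]) (simp add: Sig_pow_carr M_sub)
qed

lemma claim: "\<forall>n a t y i. 2 \<le> n \<longrightarrow> t \<in> Shat (n + j) \<longrightarrow> a + 2 \<le> n + j \<longrightarrow> y \<in> carr M a \<longrightarrow>
   n \<le> i \<longrightarrow> i < n + j \<longrightarrow> (\<forall>x<a. fst t x \<noteq> i) \<longrightarrow> act M a (n + j) t y \<in> snd ((Del ^^ j) (as_sq M)) n"
proof (induction j)
  case 0 then show ?case by simp
next
  case (Suc j)
  show ?case
  proof (intro allI impI)
    fix n a t y i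
    assume n2: "2 \<le> n" and t: "t \<in> Shat (n + Suc j)" and a2: "a + 2 \<le> n + Suc j" and y: "y \<in> carr M a"
      and ni: "n \<le> i" and iT: "i < n + Suc j" and miss: "\<forall>x<a. fst t x \<noteq> i"
    define T where "T = n + Suc j"
    have fstP: "fst (as_sq M) = M" by (simp add: as_sq_def)
    define E where "E = W j n (Suc n) sone"
    have E: "E \<in> Shat T" unfolding E_def T_def using W_Shat[of n "Suc n" sone j] sone_Shat by simp
    have Sa: "act ((Sig_mod ^^ j) M) n (Suc n) sone b = act M (n + j) T E b" for b
      by (simp add: Sig_pow_act E_def T_def)
    have zs: "act ((Sig_mod ^^ j) M) n (Suc n) sone 0 = 0"
      unfolding Sa using M_zero[OF _ E] by (simp add: T_def)
    show "act M a (n + Suc j) t y \<in> snd ((Del ^^ Suc j) (as_sq M)) n"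
    proof (cases "n < i")
      case True
      have "act M a (Suc n + j) t y \<in> snd ((Del ^^ j) (as_sq M)) (Suc n)"
        by (rule Suc.IH[rule_format]) (use n2 t a2 y True iT miss in auto)
      then have "act M a (n + Suc j) t y + act ((Sig_mod ^^ j) M) n (Suc n) sone 0 \<in> snd ((Del ^^ Suc j) (as_sq M)) n"
        unfolding Del_pow_snd fstP using sg_0[OF M_sub, of "n + j"] by (auto simp: Sig_pow_carr)
      then show ?thesis using zs by simp
    next
      case False
      then have i: "i = n" using ni by simp
      have gE: "good T E" using Shat_good[OF E] .
      have Eperm: "fst E permutes {..<T}" using gE by (simp add: good_def)
      have Emiss: "fst E x \<noteq> n" if "x < n + j" for x
        using W_miss[of sone x n j] that by (simp add: E_def sone_def)
      have ET: "fst E (T - 1) = n"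
      proof -
        have "n \<in> fst E ` {..<T}" using Eperm permutes_image[OF Eperm] by (simp add: T_def)
        then obtain x where x: "x < T" "fst E x = n" by auto
        then have "\<not> x < n + j" using Emiss[of x] by blast
        then have "x = T - 1" using x(1) by (simp add: T_def)
        then show ?thesis using x(2) by simp
      qed
      have gt: "good T t" using Shat_good t by (simp add: T_def)
      have tperm: "fst t permutes {..<T}" using gt by (simp add: good_def)
      define c where "c = inv (fst t) n"
      have tc: "fst t c = n" using permutes_inverses(1)[OF tperm] by (simp add: c_def)
      have nT: "n < T" using iT i by (simp add: T_def)
      have cT: "c < T"
        using permutes_in_image[OF permutes_inv[OF tperm], of n] nT by (simp add: c_def)
      have ca: "a \<le> c"
      proof (rule ccontr)
        assume "\<not> a \<le> c"
        then have "fst t c \<noteq> i" using miss by simp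
        then show False using tc i by simp
      qed
      have aT: "a + 2 \<le> T" using a2 by (simp add: T_def)
      define w where "w = (transpose (T - 1 - a) (c - a), if T - 1 - a = c - a then 0 else (1::int))"
      have w: "w \<in> Shat (T - a)"
        unfolding w_def using aT cT ca by (intro good_Shat good_swap) auto
      have i2w: "i2 a w = (transpose (T - 1) c, if T - 1 = c then 0 else 1)"
        using aT cT ca unfolding i2_def w_def
        by (auto simp: fun_eq_iff transpose_def)
      define t' where "t' = smul t (i2 a w)"
      have t'eq: "act M a T t' y = act M a T t y"
        unfolding t'_def using M_inv[of a T t w y] t w y aT by (simp add: T_def)
      have gt': "good T t'" unfolding t'_def i2w
        using gt good_swap[of "T - 1" T c] cT aT good_smul by simp
      have t'T: "fst t' (T - 1) = n" unfolding t'_def i2w smul_def using tc by simp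
      define u where "u = smul (sinv E) t'"
      have gu: "good T u" unfolding u_def using good_smul good_sinv gE gt' by blast
      have uT: "fst u (T - 1) = T - 1"
        unfolding u_def smul_def sinv_def using t'T ET permutes_inverses(2)[OF Eperm, of "T - 1"] by simp
      have "fst u permutes {..<T - 1}"
      proof (rule permutes_superset[of _ "{..<T}"])
        show "fst u permutes {..<T}" using gu by (simp add: good_def)
        fix x assume "x \<in> {..<T} - {..<T - 1}"
        then have "x = T - 1" by auto
        then show "fst u x = x" using uT by simp
      qed
      then have gu': "good (T - 1) u" using gu by (simp add: good_def)
      have u: "u \<in> Shat (n + j)" using good_Shat[OF _ gu'] n2 by (simp add: T_def)
      have Eu: "smul E u = t'" unfolding u_def using smul_sinv_left[OF gE] .
      have b: "act M a (n + j) u y \<in> carr ((Sig_mod ^^ j) M) n"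
        unfolding Sig_pow_carr using M_closed[OF _ u y] aT by (simp add: T_def)
      have "act M (n + j) T E (act M a (n + j) u y) = act M a T t' y"
        using M_comp[of a "n + j" T u E y] aT u E y Eu by (simp add: T_def)
      then have eq: "act M a T t y = 0 + act ((Sig_mod ^^ j) M) n (Suc n) sone (act M a (n + j) u y)"
        using t'eq Sa by simp
      have z0: "(0::'a) \<in> snd ((Del ^^ j) (as_sq M)) (Suc n)" using sg_0[OF snd_sub] .
      have "act M a T t y \<in> snd ((Del ^^ Suc j) (as_sq M)) n"
        unfolding Del_pow_snd fstP
      proof (rule CollectI, intro exI conjI)
        show "act M a T t y = 0 + act ((Sig_mod ^^ j) M) n (Suc n) sone (act M a (n + j) u y)" by (rule eq)
        show "(0::'a) \<in> snd ((Del ^^ j) (as_sq M)) (Suc n)" by (rule z0)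
        show "act M a (n + j) u y \<in> carr ((Sig_mod ^^ j) M) n" by (rule b)
      qed
      then show ?thesis by (simp only: T_def)
    qed
  qed
qed

lemma pow_fst: "fst (((smul c) ^^ j) sone) = fst c ^^ j"
  by (induction j) (auto simp: smul_def sone_def)

lemma cyc_pow_vals: "j \<le> y \<Longrightarrow> y < T \<Longrightarrow> (fst (cyc 0 (T - 1)) ^^ j) y = y - j"
proof (induction j)
  case 0 then show ?case by simp
next
  case (Suc j)
  then have "(fst (cyc 0 (T - 1)) ^^ Suc j) y = fst (cyc 0 (T - 1)) (y - j)" by simp
  also have "\<dots> = y - Suc j" using Suc.prems by (simp add: cyc_def)
  finally show ?case .
qed

lemma pow_good: "good T c \<Longrightarrow> good T (((smul c) ^^ j) sone)"
  by (induction j) (auto simp: good_sone good_smul)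

lemma main_torsion:
  assumes gd: "gen_deg_le ((Sig ^^ N) (as_sq M)) d" and d0: "0 \<le> d"
  shows "torsion ((Del ^^ nat (d + 1)) (as_sq M))"
proof -
  define k where "k = nat (d + 1)"
  have k1: "1 \<le> k" and kd: "int k = d + 1" using d0 by (auto simp: k_def)
  have fstP: "fst ((Del ^^ k) (as_sq M)) = (Sig_mod ^^ k) M" by (simp add: Del_pow_fst as_sq_def)
  have gd': "\<forall>n. carr ((Sig_mod ^^ N) M) n \<subseteq> add_span ({act ((Sig_mod ^^ N) M) k' n s y | k' s y.
      int k' \<le> d \<and> k' \<le> n \<and> s \<in> Shat n \<and> y \<in> carr ((Sig_mod ^^ N) M) k'} \<union> {0})"
    using gd unfolding gen_deg_le_def Sig_pow_sq by simp
  have "\<forall>n0. \<forall>x\<in>carr (fst ((Del ^^ k) (as_sq M))) n0. \<exists>m\<ge>n0. \<exists>s\<in>Shat m.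
      act (fst ((Del ^^ k) (as_sq M))) n0 m s x \<in> snd ((Del ^^ k) (as_sq M)) m"
  proof (intro allI ballI)
    fix n0 x assume x0: "x \<in> carr (fst ((Del ^^ k) (as_sq M))) n0"
    then have x: "x \<in> carr M (n0 + k)" by (simp add: fstP Sig_pow_carr)
    define p where "p = n0 + N + 2"
    define T where "T = p + k"
    define q where "q = n0 + 2 + k"
    have qT: "q + N = T" by (simp add: q_def T_def p_def)
    have T2: "2 \<le> T" by (simp add: T_def p_def)
    define K where "K = snd ((Del ^^ k) (as_sq M)) p"
    have Ksub: "is_subgroup K" unfolding K_def by (rule snd_sub)
    define c where "c = cyc 0 (T - 1)"
    have gc: "good T c" using good_cyc[of 0 "T - 1"] T2 by (simp add: c_def)
    define \<beta> where "\<beta> = ((smul c) ^^ k) sone"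
    have g\<beta>: "good T \<beta>" unfolding \<beta>_def by (rule pow_good[OF gc])
    have \<beta>S: "\<beta> \<in> Shat T" using good_Shat[OF T2 g\<beta>] .
    have f\<beta>: "fst \<beta> y = y - k" if "k \<le> y" "y < T" for y
      using cyc_pow_vals[OF that] unfolding \<beta>_def pow_fst c_def by simp
    define \<beta>' where "\<beta>' = sinv \<beta>"
    have \<beta>'S: "\<beta>' \<in> Shat T" unfolding \<beta>'_def using good_Shat[OF T2 good_sinv[OF g\<beta>]] .
    have \<beta>\<beta>': "smul \<beta> \<beta>' = sone" unfolding \<beta>'_def using smul_sinv[OF g\<beta>] .
    define H where "H = {w \<in> carr M T. act M T T \<beta> w \<in> K}"
    have Hsub: "is_subgroup H" unfolding H_def
      by (rule preimage_subgroup[OF Ksub M_sub M_add[OF order_refl \<beta>S]])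
    define G where "G = {act ((Sig_mod ^^ N) M) k' q s y | k' s y.
      int k' \<le> d \<and> k' \<le> q \<and> s \<in> Shat q \<and> y \<in> carr ((Sig_mod ^^ N) M) k'} \<union> {0}"
    have GH: "G \<subseteq> H"
    proof
      fix g assume "g \<in> G"
      then consider "g = 0" | a s y where "g = act ((Sig_mod ^^ N) M) a q s y" "int a \<le> d" "a \<le> q"
          "s \<in> Shat q" "y \<in> carr ((Sig_mod ^^ N) M) a"
        unfolding G_def by blast
      then show "g \<in> H"
      proof cases
        case 1
        then show ?thesis unfolding H_def using sg_0[OF M_sub] M_zero[OF order_refl \<beta>S] sg_0[OF Ksub] by simp
      next
        case 2
        note a = 2
        have y: "y \<in> carr M (a + N)" using a(5) by (simp add: Sig_pow_carr)
        define t where "t = W N a q s"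
        have tS: "t \<in> Shat T" unfolding t_def using W_Shat[OF a(3) a(4), of N] qT by simp
        have gt: "g = act M (a + N) T t y" unfolding a(1) Sig_pow_act t_def using qT by simp
        have aN: "a + N \<le> T" using a(3) qT by simp
        have gC: "g \<in> carr M T" unfolding gt by (rule M_closed[OF aN tS y])
        have \<beta>g: "act M T T \<beta> g = act M (a + N) T (smul \<beta> t) y"
          unfolding gt by (rule M_comp[OF aN order_refl tS \<beta>S y])
        have ak: "a < k" using a(2) kd by simp
        define S where "S = fst \<beta> ` fst s ` {..<a}"
        have "card S \<le> a" unfolding S_def
          by (metis card_image_le card_lessThan finite_imageI finite_lessThan le_trans)
        moreover have "card {p..<T} = k" by (simp add: T_def)
        moreover have finS: "finite S" by (simp add: S_def)
        ultimately have "\<not> {p..<T} \<subseteq> S" using ak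
          by (metis card_mono not_le le_trans)
        then obtain i where i0: "i \<in> {p..<T}" "i \<notin> S" by blast
        then have i: "p \<le> i" "i < T" "i \<notin> S" by auto
        have sfix: "\<forall>y\<ge>q. fst s y = y"
        proof -
          have "fst s permutes {..<q}" using Shat_good[OF a(4)] by (simp add: good_def)
          then show ?thesis by (simp add: permutes_not_in)
        qed
        have miss: "\<forall>x<a + N. fst (smul \<beta> t) x \<noteq> i"
        proof (intro allI impI)
          fix x assume xa: "x < a + N"
          show "fst (smul \<beta> t) x \<noteq> i"
          proof (cases "x < a")
            case True
            then have "fst (smul \<beta> t) x = fst \<beta> (fst s x)"
              unfolding smul_def t_def using W_low by simp
            moreover have "fst \<beta> (fst s x) \<in> S" unfolding S_def using True by auto
            ultimately show ?thesis using i(3) by auto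
          next
            case False
            then have tx: "q \<le> fst t x \<and> fst t x < q + N"
              unfolding t_def using W_high[OF a(3) sfix, of x N] xa by simp
            have kq: "k \<le> q" by (simp add: q_def)
            have e1: "fst \<beta> (fst t x) = fst t x - k" using f\<beta> qT tx kq by simp
            have "fst t x < T" using tx qT by simp
            then have "fst t x < p + k" by (simp add: T_def)
            then have "fst t x - k < p" using tx kq by arith
            then have "fst (smul \<beta> t) x < p" using e1 by (simp add: smul_def)
            then show ?thesis using i(1) by simp
          qed
        qed
        have bt: "smul \<beta> t \<in> Shat (p + k)"
          using good_Shat[OF T2 good_smul[OF g\<beta> Shat_good[OF tS]]] by (simp add: T_def)
        have "act M (a + N) (p + k) (smul \<beta> t) y \<in> snd ((Del ^^ k) (as_sq M)) p"
        proof (rule claim[rule_format])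
          show "2 \<le> p" by (simp add: p_def)
          show "smul \<beta> t \<in> Shat (p + k)" by (rule bt)
          show "a + N + 2 \<le> p + k" using ak by (simp add: p_def)
          show "y \<in> carr M (a + N)" by (rule y)
          show "p \<le> i" by (rule i(1))
          show "i < p + k" using i(2) by (simp add: T_def)
          show "\<And>x. x < a + N \<Longrightarrow> fst (smul \<beta> t) x \<noteq> i" using miss by blast
        qed
        then show ?thesis unfolding H_def K_def using gC \<beta>g by (simp add: T_def)
      qed
    qed
    have key: "carr M T \<subseteq> K"
    proof
      fix z assume z: "z \<in> carr M T"
      define z' where "z' = act M T T \<beta>' z"
      have z'C: "z' \<in> carr M T" unfolding z'_def by (rule M_closed[OF order_refl \<beta>'S z])
      then have "z' \<in> carr ((Sig_mod ^^ N) M) q" by (simp add: Sig_pow_carr qT)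
      then have "z' \<in> add_span G" using gd' unfolding G_def by blast
      then have "z' \<in> H" using add_span_least[OF Hsub GH] by blast
      then have "act M T T \<beta> z' \<in> K" unfolding H_def by simp
      moreover have "act M T T \<beta> z' = z"
        unfolding z'_def using M_comp[OF order_refl order_refl \<beta>'S \<beta>S z] \<beta>\<beta>' M_id[OF z] by simp
      ultimately show "z \<in> K" by simp
    qed
    have n0p: "n0 \<le> p" by (simp add: p_def)
    have WS: "W k n0 p sone \<in> Shat T" using W_Shat[OF n0p sone_Shat, of k] by (simp add: T_def)
    have "act (fst ((Del ^^ k) (as_sq M))) n0 p sone x = act M (n0 + k) T (W k n0 p sone) x"
      by (simp add: fstP Sig_pow_act T_def)
    moreover have "act M (n0 + k) T (W k n0 p sone) x \<in> carr M T"
      by (rule M_closed[OF _ WS x]) (simp add: T_def p_def)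
    ultimately have "act (fst ((Del ^^ k) (as_sq M))) n0 p sone x \<in> snd ((Del ^^ k) (as_sq M)) p"
      using key K_def by (metis subsetD)
    then show "\<exists>m\<ge>n0. \<exists>s\<in>Shat m. act (fst ((Del ^^ k) (as_sq M))) n0 m s x \<in> snd ((Del ^^ k) (as_sq M)) m"
      using n0p sone_Shat by blast
  qed
  then show ?thesis unfolding torsion_def k_def by blast
qed

lemma zero_torsion:
  assumes gd: "gen_deg_le ((Sig ^^ N) (as_sq M)) (-1)"
  shows "torsion ((Del ^^ nat (-1 + 1)) (as_sq M))"
proof -
  have gd': "\<forall>n. carr ((Sig_mod ^^ N) M) n \<subseteq> add_span ({act ((Sig_mod ^^ N) M) k' n s y | k' s y.
      int k' \<le> -1 \<and> k' \<le> n \<and> s \<in> Shat n \<and> y \<in> carr ((Sig_mod ^^ N) M) k'} \<union> {0})"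
    using gd unfolding gen_deg_le_def Sig_pow_sq by simp
  have e: "{act ((Sig_mod ^^ N) M) k' n s y | k' s y.
      int k' \<le> -1 \<and> k' \<le> n \<and> s \<in> Shat n \<and> y \<in> carr ((Sig_mod ^^ N) M) k'} = {}" for n
    by auto
  have z: "add_span {0::'a} \<subseteq> {0}" by (rule add_span_least) (auto simp: is_subgroup_def)
  have "\<forall>n. \<forall>x\<in>carr M n. \<exists>m\<ge>n. \<exists>s\<in>Shat m. act M n m s x \<in> {0}"
  proof (intro allI ballI)
    fix n x assume x: "x \<in> carr M n"
    have "act M n (n + N) sone x \<in> carr M (n + N)" by (rule M_closed[OF _ sone_Shat x]) simp
    then have "act M n (n + N) sone x \<in> carr ((Sig_mod ^^ N) M) n" by (simp add: Sig_pow_carr)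
    then have "act M n (n + N) sone x \<in> {0}" using gd'[rule_format, of n] e z by auto
    then show "\<exists>m\<ge>n. \<exists>s\<in>Shat m. act M n m s x \<in> {0}" using sone_Shat by (intro exI[of _ "n + N"]) auto
  qed
  then show ?thesis by (simp add: torsion_def as_sq_def)
qed

end

theorem mainTheorem12:
  fixes M :: "'a::ab_group_add fhmod" and N :: nat and d :: int
  assumes "fihat_module M"
    and "-1 \<le> d"
    and "fi_module ((Sig ^^ N) (as_sq M))"
    and "gen_deg_le ((Sig ^^ N) (as_sq M)) d"
  shows "stable_degree (as_sq M) \<le> ereal (of_int d)"
proof -
  have tors: "torsion ((Del ^^ nat (d + 1)) (as_sq M))"
  proof (cases "d = -1")
    case True
    then show ?thesis using zero_torsion[OF assms(1)] assms(4) by simp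
  next
    case False
    then show ?thesis using main_torsion[OF assms(1) assms(4)] assms(2) by simp
  qed
  have "ereal (of_int d) \<in> {ereal (of_int N') | N'. N' \<ge> -1 \<and> torsion ((Del ^^ nat (N' + 1)) (as_sq M))}"
    using tors assms(2) by blast
  then show ?thesis unfolding stable_degree_def by (rule Inf_lower)
qed

end
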